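(* Given an arbitrary sequence of instances $\{\mathcal{I}_N\}_{N=1}^{\infty}$ and an arbitrary regular strategy profile sequence $\{\Sigma_{N}\}_{N=1}^{\infty}$, let $\{A(\Sigma_{N})\}_{N=1}^{\infty}$ be the sequence of the fidelities of $\Sigma_N$. (1) If $\lim_{N\to \infty} A(\Sigma_{N}) = 1$, then for every $N$, $\Sigma_{N}$ is an $\varepsilon$-strong Bayes Nash Equilibrium with $\varepsilon = o(1)$. (2) If $\lim_{N\to \infty} A(\Sigma_{N}) = 1$ does not hold, then there exist infinitely many $N$ such that $\Sigma_{N}$ is NOT an $\varepsilon$-strong Bayes Nash Equilibrium for some constant $\varepsilon>0$.
   Context: Binary voting model. $N$ agents vote for one of two alternatives $\mathbf{A}$ (accept) and $\mathbf{R}$ (reject). There are two world states $L,H$ with common prior $P_L=\Pr[W=L]>0$, $P_H=\Pr[W=H]>0$; the state is not observed. Each agent receives a private signal in $\{l,h\}$, i.i.d. conditioned on the state, with $P_{sw}=\Pr[\text{signal}=s\mid W=w]$ common knowledge and $P_{hH}>P_{hL}$, $P_{lH}<P_{lL}$. Majority vote with threshold $\mu$: $\mathbf{A}$ wins iff at least $\mu N$ agents vote for $\mathbf{A}$. Each agent $n$ has utility $v_n:\{L,H\}\times\{\mathbf{A},\mathbf{R}\}\to\{0,1,\dots,B\}$ ($B$ a positive integer) with $v_n(H,\mathbf{A})>v_n(L,\mathbf{A})$ and $v_n(H,\mathbf{R})<v_n(L,\mathbf{R})$. Friendly agents satisfy $v_n(H,\mathbf{A})>v_n(L,\mathbf{A})>v_n(L,\mathbf{R})>v_n(H,\mathbf{R})$;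 unfriendly agents satisfy $v_n(L,\mathbf{R})>v_n(H,\mathbf{R})>v_n(H,\mathbf{A})>v_n(L,\mathbf{A})$; contingent agents satisfy $v_n(H,\mathbf{A})>v_n(H,\mathbf{R})$ and $v_n(L,\mathbf{R})>v_n(L,\mathbf{A})$. There are $\lfloor\alpha_F N\rfloor$ friendly, $\lfloor\alpha_U N\rfloor$ unfriendly and the rest contingent agents, with $\alpha_F,\alpha_U,\alpha_C$ fixed and common knowledge; neither friendly nor unfriendly agents alone can determine the outcome, so the informed majority decision is $\mathbf{A}$ in state $H$ and $\mathbf{R}$ in state $L$. A (mixed) strategy maps the signal to a probability of voting $\mathbf{A}$; a strategy profile is regular if all friendly agents always vote $\mathbf{A}$ and all unfriendly agents always vote $\mathbf{R}$. With $\lambda_w^{\mathbf{A}}(\Sigma)$, $\lambda_w^{\mathbf{R}}(\Sigma)$ the ex-ante probabilities that $\mathbf{A}$, resp. $\mathbf{R}$, wins in state $w$, the fidelity is $A(\Sigma)=P_L\lambda_L^{\mathbf{R}}(\Sigma)+P_H\lambda_H^{\mathbf{A}}(\Sigma)$ and the ex-ante expected utility is $u_n(\Sigma)=\sum_{w\in\{L,H\}}P_w(\lambda_w^{\mathbf{A}}(\Sigma)v_n(w,\mathbf{A})+\lambda_w^{\mathbf{R}}(\Sigma)v_n(w,\mathbf{R}))$. A sequence of instances $\{\mathcal{I}_N\}$ shares $\mu$, prior, signal distribution and type fractions (utilities may vary arbitrarily with $N$); $\Sigma_N$ is a profile in $\mathcal{I}_N$. A profile $\Sigma$ is an $\varepsilon$-strong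 Bayes Nash Equilibrium if there is no coalition $D$ and profile $\Sigma'$ agreeing with $\Sigma$ outside $D$ such that $u_n(\Sigma')\ge u_n(\Sigma)$ for all $n\in D$ and $u_n(\Sigma')>u_n(\Sigma)+\varepsilon$ for some $n\in D$. *)

theory Defs
  imports Complex_Main
begin

datatype state = L | H
datatype outcome = Acc | Rej
datatype signal = Sl | Sh

text \<open>Agents of the instance with N agents are 0..N-1.
  A (mixed) strategy profile is a function \<open>nat \<Rightarrow> signal \<Rightarrow> real\<close> giving each agent's
  probability of voting Accept after each signal.
  Signal distribution: \<open>P s w\<close> = Pr[signal = s | W = w].\<close>

definition valid_profile :: "nat \<Rightarrow> (nat \<Rightarrow> signal \<Rightarrow> real) \<Rightarrow> bool" where
  "valid_profile N \<sigma> \<longleftrightarrow> (\<forall>n<N. \<forall>s. 0 \<le> \<sigma> n s \<and> \<sigma> n s \<le> 1)"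

definition friendly :: "(state \<Rightarrow> outcome \<Rightarrow> nat) \<Rightarrow> bool" where
  "friendly v \<longleftrightarrow> v H Acc > v L Acc \<and> v L Acc > v L Rej \<and> v L Rej > v H Rej"

definition unfriendly :: "(state \<Rightarrow> outcome \<Rightarrow> nat) \<Rightarrow> bool" where
  "unfriendly v \<longleftrightarrow> v L Rej > v H Rej \<and> v H Rej > v H Acc \<and> v H Acc > v L Acc"

definition contingent :: "(state \<Rightarrow> outcome \<Rightarrow> nat) \<Rightarrow> bool" where
  "contingent v \<longleftrightarrow> v H Acc > v H Rej \<and> v L Rej > v L Acc"

definition vote_prob :: "(signal \<Rightarrow> state \<Rightarrow> real) \<Rightarrow> (nat \<Rightarrow> signal \<Rightarrow> real) \<Rightarrow> nat \<Rightarrow> state \<Rightarrow> real" where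
  "vote_prob P \<sigma> n w = P Sh w * \<sigma> n Sh + P Sl w * \<sigma> n Sl"

definition lamA :: "nat \<Rightarrow> real \<Rightarrow> (signal \<Rightarrow> state \<Rightarrow> real) \<Rightarrow> (nat \<Rightarrow> signal \<Rightarrow> real) \<Rightarrow> state \<Rightarrow> real" where
  "lamA N \<mu> P \<sigma> w =
     (\<Sum>S\<in>{S. S \<subseteq> {..<N} \<and> real (card S) \<ge> \<mu> * real N}.
        (\<Prod>n\<in>S. vote_prob P \<sigma> n w) * (\<Prod>n\<in>{..<N} - S. 1 - vote_prob P \<sigma> n w))"

definition lamR :: "nat \<Rightarrow> real \<Rightarrow> (signal \<Rightarrow> state \<Rightarrow> real) \<Rightarrow> (nat \<Rightarrow> signal \<Rightarrow> real) \<Rightarrow> state \<Rightarrow> real" where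
  "lamR N \<mu> P \<sigma> w = 1 - lamA N \<mu> P \<sigma> w"

definition fidelity :: "nat \<Rightarrow> real \<Rightarrow> (state \<Rightarrow> real) \<Rightarrow> (signal \<Rightarrow> state \<Rightarrow> real) \<Rightarrow> (nat \<Rightarrow> signal \<Rightarrow> real) \<Rightarrow> real" where
  "fidelity N \<mu> pr P \<sigma> = pr L * lamR N \<mu> P \<sigma> L + pr H * lamA N \<mu> P \<sigma> H"

definition exp_util :: "nat \<Rightarrow> real \<Rightarrow> (state \<Rightarrow> real) \<Rightarrow> (signal \<Rightarrow> state \<Rightarrow> real)
    \<Rightarrow> (state \<Rightarrow> outcome \<Rightarrow> nat) \<Rightarrow> (nat \<Rightarrow> signal \<Rightarrow> real) \<Rightarrow> real" where
  "exp_util N \<mu> pr P vn \<sigma> =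
     (\<Sum>w\<in>{L, H}. pr w * (lamA N \<mu> P \<sigma> w * real (vn w Acc) + lamR N \<mu> P \<sigma> w * real (vn w Rej)))"

definition regular :: "nat \<Rightarrow> (nat \<Rightarrow> state \<Rightarrow> outcome \<Rightarrow> nat) \<Rightarrow> (nat \<Rightarrow> signal \<Rightarrow> real) \<Rightarrow> bool" where
  "regular N v \<sigma> \<longleftrightarrow> valid_profile N \<sigma> \<and>
     (\<forall>n<N. friendly (v n) \<longrightarrow> (\<forall>s. \<sigma> n s = 1)) \<and>
     (\<forall>n<N. unfriendly (v n) \<longrightarrow> (\<forall>s. \<sigma> n s = 0))"

definition strong_BNE :: "nat \<Rightarrow> real \<Rightarrow> (state \<Rightarrow> real) \<Rightarrow> (signal \<Rightarrow> state \<Rightarrow> real)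
    \<Rightarrow> (nat \<Rightarrow> state \<Rightarrow> outcome \<Rightarrow> nat) \<Rightarrow> (nat \<Rightarrow> signal \<Rightarrow> real) \<Rightarrow> real \<Rightarrow> bool" where
  "strong_BNE N \<mu> pr P v \<sigma> \<epsilon> \<longleftrightarrow>
     \<not> (\<exists>D \<sigma>'. D \<subseteq> {..<N} \<and> valid_profile N \<sigma>' \<and> (\<forall>n<N. n \<notin> D \<longrightarrow> \<sigma>' n = \<sigma> n) \<and>
          (\<forall>n\<in>D. exp_util N \<mu> pr P (v n) \<sigma>' \<ge> exp_util N \<mu> pr P (v n) \<sigma>) \<and>
          (\<exists>n\<in>D. exp_util N \<mu> pr P (v n) \<sigma>' > exp_util N \<mu> pr P (v n) \<sigma> + \<epsilon>))"

definition is_instance :: "nat \<Rightarrow> nat \<Rightarrow> real \<Rightarrow> real \<Rightarrow> (nat \<Rightarrow> state \<Rightarrow> outcome \<Rightarrow> nat) \<Rightarrow> bool" where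
  "is_instance N B \<alpha>F \<alpha>U v \<longleftrightarrow>
     (\<forall>n<N. \<forall>w a. v n w a \<le> B) \<and>
     (\<forall>n<N. v n H Acc > v n L Acc \<and> v n H Rej < v n L Rej) \<and>
     (\<forall>n<N. friendly (v n) \<or> unfriendly (v n) \<or> contingent (v n)) \<and>
     card {n. n < N \<and> friendly (v n)} = nat \<lfloor>\<alpha>F * real N\<rfloor> \<and>
     card {n. n < N \<and> unfriendly (v n)} = nat \<lfloor>\<alpha>U * real N\<rfloor>"

end

theory Submission imports Defs begin



definition WW :: "nat set \<Rightarrow> (nat \<Rightarrow> real) \<Rightarrow> nat set \<Rightarrow> real" where
  "WW A p S = (\<Prod>i\<in>S. p i) * (\<Prod>i\<in>A - S. 1 - p i)"

definition EE :: "nat set \<Rightarrow> (nat \<Rightarrow> real) \<Rightarrow> (nat \<Rightarrow> real) \<Rightarrow> real" where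
  "EE A p h = (\<Sum>S\<in>Pow A. WW A p S * h (card S))"

lemma EE_insert:
  assumes "finite A" "x \<notin> A"
  shows "EE (insert x A) p h = p x * EE A p (\<lambda>c. h (Suc c)) + (1 - p x) * EE A p h"
proof -
  have "EE (insert x A) p h = (\<Sum>X\<in>Pow A. WW (insert x A) p X * h (card X)) +
        (\<Sum>X\<in>insert x ` (Pow A). WW (insert x A) p X * h (card X))"
    unfolding EE_def Pow_insert by (rule sum.union_disjoint) (use assms in auto)
  also have "(\<Sum>X\<in>Pow A. WW (insert x A) p X * h (card X)) = (\<Sum>X\<in>Pow A. (1 - p x) * (WW A p X * h (card X)))"
  proof (rule sum.cong)
    fix X assume X: "X \<in> Pow A"
    have "insert x A - X = insert x (A - X)" using assms X by auto
    then show "WW (insert x A) p X * h (card X) = (1 - p x) * (WW A p X * h (card X))"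
      unfolding WW_def using assms X by (simp add: mult_ac)
  qed auto
  also have "(\<Sum>X\<in>insert x ` (Pow A). WW (insert x A) p X * h (card X)) =
        (\<Sum>X\<in>Pow A. WW (insert x A) p (insert x X) * h (card (insert x X)))"
    by (subst sum.reindex) (use assms in \<open>auto intro!: inj_onI simp: o_def\<close>)
  also have "\<dots> = (\<Sum>X\<in>Pow A. p x * (WW A p X * h (Suc (card X))))"
  proof (rule sum.cong)
    fix X assume X: "X \<in> Pow A"
    have f: "finite X" using X assms finite_subset by auto
    have "insert x A - insert x X = A - X" using assms X by auto
    moreover have "x \<notin> X" using X assms by auto
    ultimately show "WW (insert x A) p (insert x X) * h (card (insert x X)) = p x * (WW A p X * h (Suc (card X)))"
      unfolding WW_def using f by (simp add: mult_ac)
  qed auto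
  finally show ?thesis unfolding EE_def by (simp add: sum_distrib_left algebra_simps)
qed

lemma EE_empty: "EE {} p h = h 0"
  unfolding EE_def WW_def by simp

lemma EE_const: "finite A \<Longrightarrow> EE A p (\<lambda>_. k) = k"
  by (induction A rule: finite_induct) (simp_all add: EE_empty EE_insert algebra_simps)

lemma EE_add: "EE A p (\<lambda>c. f c + g c) = EE A p f + EE A p g"
  unfolding EE_def by (simp add: algebra_simps sum.distrib)

lemma EE_diff: "EE A p (\<lambda>c. f c - g c) = EE A p f - EE A p g"
  unfolding EE_def by (simp add: algebra_simps sum_subtractf)

lemma EE_cmult: "EE A p (\<lambda>c. a * f c) = a * EE A p f"
  unfolding EE_def by (simp add: sum_distrib_left mult_ac)

lemma WW_nonneg: "(\<And>i. i \<in> A \<Longrightarrow> 0 \<le> p i \<and> p i \<le> 1) \<Longrightarrow> S \<subseteq> A \<Longrightarrow> 0 \<le> WW A p S"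
  unfolding WW_def by (intro mult_nonneg_nonneg prod_nonneg) auto

lemma EE_mono_h:
  assumes "\<And>i. i \<in> A \<Longrightarrow> 0 \<le> p i \<and> p i \<le> 1" "\<And>c. f c \<le> g c"
  shows "EE A p f \<le> EE A p g"
  unfolding EE_def by (intro sum_mono mult_left_mono WW_nonneg) (use assms in auto)

lemma EE_nonneg:
  assumes "\<And>i. i \<in> A \<Longrightarrow> 0 \<le> p i \<and> p i \<le> 1" "\<And>c. 0 \<le> g c"
  shows "0 \<le> EE A p g"
  unfolding EE_def by (intro sum_nonneg mult_nonneg_nonneg WW_nonneg) (use assms in auto)

lemma EE_mono_p:
  assumes "finite A" "\<And>i. i \<in> A \<Longrightarrow> 0 \<le> q i \<and> q i \<le> p i \<and> p i \<le> 1" "mono h"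
  shows "EE A q h \<le> EE A p h"
  using assms
proof (induction A arbitrary: h rule: finite_induct)
  case empty
  then show ?case by (simp add: EE_empty)
next
  case (insert x A)
  have pA: "\<And>i. i \<in> A \<Longrightarrow> 0 \<le> p i \<and> p i \<le> 1" "\<And>i. i \<in> A \<Longrightarrow> 0 \<le> q i \<and> q i \<le> 1"
    using insert.prems by force+
  have mS: "mono (\<lambda>c. h (Suc c))" using insert.prems(2) by (simp add: mono_def)
  have X: "EE A q (\<lambda>c. h (Suc c)) \<le> EE A p (\<lambda>c. h (Suc c))"
    by (rule insert.IH) (use insert.prems mS in auto)
  have Y: "EE A q h \<le> EE A p h"
    by (rule insert.IH) (use insert.prems in auto)
  have XY: "EE A p h \<le> EE A p (\<lambda>c. h (Suc c))"
    by (rule EE_mono_h[OF pA(1)]) (use insert.prems(2) in \<open>auto simp: mono_def\<close>)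
  have qx: "0 \<le> q x" "q x \<le> p x" "p x \<le> 1" using insert.prems(1) by auto
  have "EE (insert x A) q h = q x * EE A q (\<lambda>c. h (Suc c)) + (1 - q x) * EE A q h"
    by (rule EE_insert) (use insert.hyps in auto)
  also have "\<dots> \<le> q x * EE A p (\<lambda>c. h (Suc c)) + (1 - q x) * EE A p h"
    by (intro add_mono mult_left_mono X Y) (use qx in auto)
  also have "\<dots> = EE A p h + q x * (EE A p (\<lambda>c. h (Suc c)) - EE A p h)" by (simp add: algebra_simps)
  also have "\<dots> \<le> EE A p h + p x * (EE A p (\<lambda>c. h (Suc c)) - EE A p h)"
    by (intro add_left_mono mult_right_mono) (use qx XY in auto)
  also have "\<dots> = EE (insert x A) p h"
    by (subst EE_insert) (use insert.hyps in \<open>auto simp: algebra_simps\<close>)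
  finally show ?case .
qed

lemma EE_card: "finite A \<Longrightarrow> EE A p (\<lambda>c. real c) = (\<Sum>i\<in>A. p i)"
  by (induction A rule: finite_induct) (simp_all add: EE_empty EE_insert EE_add EE_const algebra_simps)

lemma EE_card2: "finite A \<Longrightarrow> EE A p (\<lambda>c. real c ^ 2) = (\<Sum>i\<in>A. p i)^2 + (\<Sum>i\<in>A. p i * (1 - p i))"
proof (induction A rule: finite_induct)
  case empty
  then show ?case by (simp add: EE_empty)
next
  case (insert x A)
  have e: "(\<lambda>c. real (Suc c) ^ 2) = (\<lambda>c. real c ^ 2 + (2 * real c + 1))"
    by (auto simp: power2_eq_square algebra_simps)
  have e2: "EE A p (\<lambda>c. 2 * real c + 1) = 2 * (\<Sum>i\<in>A. p i) + 1"
    using EE_add[of A p "\<lambda>c. 2 * real c" "\<lambda>_. 1"] EE_cmult[of A p 2 "\<lambda>c. real c"] EE_card[OF insert.hyps(1)]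
      EE_const[OF insert.hyps(1)] by simp
  have "EE (insert x A) p (\<lambda>c. real c ^ 2) = p x * EE A p (\<lambda>c. real c ^ 2 + (2 * real c + 1)) + (1 - p x) * EE A p (\<lambda>c. real c ^ 2)"
    using EE_insert[OF insert.hyps, of p "\<lambda>c. real c ^ 2"] e by simp
  also have "\<dots> = p x * (EE A p (\<lambda>c. real c ^ 2) + (2 * (\<Sum>i\<in>A. p i) + 1)) + (1 - p x) * EE A p (\<lambda>c. real c ^ 2)"
    using EE_add[of A p "\<lambda>c. real c ^ 2" "\<lambda>c. 2 * real c + 1"] e2 by simp
  finally show ?case using insert.IH insert.hyps
    by (simp add: power2_eq_square algebra_simps)
qed

lemma EE_var:
  assumes "finite A"
  shows "EE A p (\<lambda>c. (real c - (\<Sum>i\<in>A. p i))^2) = (\<Sum>i\<in>A. p i * (1 - p i))"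
proof -
  define m where "m = (\<Sum>i\<in>A. p i)"
  have e: "(\<lambda>c. (real c - m)^2) = (\<lambda>c. (real c ^ 2 + m^2) - 2 * m * real c)"
    by (auto simp: power2_eq_square algebra_simps)
  show ?thesis unfolding m_def[symmetric] e EE_diff EE_add EE_cmult
    using EE_card2[OF assms, of p] EE_card[OF assms, of p] EE_const[OF assms]
    by (simp add: m_def power2_eq_square algebra_simps)
qed



lemma lamA_EE: "lamA N \<mu> P \<sigma> w = EE {..<N} (\<lambda>n. vote_prob P \<sigma> n w) (\<lambda>c. if \<mu> * real N \<le> real c then 1 else 0)"
proof -
  have "EE {..<N} (\<lambda>n. vote_prob P \<sigma> n w) (\<lambda>c. if \<mu> * real N \<le> real c then 1 else 0)
     = (\<Sum>S\<in>Pow {..<N}. if \<mu> * real N \<le> real (card S) then WW {..<N} (\<lambda>n. vote_prob P \<sigma> n w) S else 0)"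
    unfolding EE_def by (intro sum.cong) auto
  also have "\<dots> = (\<Sum>S\<in>Pow {..<N} \<inter> {S. \<mu> * real N \<le> real (card S)}. WW {..<N} (\<lambda>n. vote_prob P \<sigma> n w) S)"
    by (subst sum.inter_restrict) auto
  also have "Pow {..<N} \<inter> {S. \<mu> * real N \<le> real (card S)} = {S. S \<subseteq> {..<N} \<and> real (card S) \<ge> \<mu> * real N}"
    by auto
  finally show ?thesis unfolding lamA_def WW_def by simp
qed

lemma cheb_upper:
  assumes "finite A" "\<And>i. i \<in> A \<Longrightarrow> 0 \<le> p i \<and> p i \<le> 1" "(\<Sum>i\<in>A. p i) \<le> t"
  shows "EE A p (\<lambda>c. if t \<le> real c then 1 else 0) * (t - (\<Sum>i\<in>A. p i))^2 \<le> (\<Sum>i\<in>A. p i * (1 - p i))"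
proof -
  define m where "m = (\<Sum>i\<in>A. p i)"
  have "EE A p (\<lambda>c. if t \<le> real c then 1 else 0) * (t - m)^2 = EE A p (\<lambda>c. (t - m)^2 * (if t \<le> real c then 1 else 0))"
    using EE_cmult[of A p "(t - m)^2" "\<lambda>c. if t \<le> real c then 1 else 0"] by (simp add: mult.commute)
  also have "\<dots> \<le> EE A p (\<lambda>c. (real c - m)^2)"
  proof (rule EE_mono_h[OF assms(2)])
    fix c
    show "(t - m)^2 * (if t \<le> real c then 1 else 0) \<le> (real c - m)^2"
      using assms(3) unfolding m_def[symmetric] by (auto intro!: power_mono)
  qed auto
  finally show ?thesis using EE_var[OF assms(1), of p] by (simp add: m_def)
qed

lemma cheb_lower:
  assumes "finite A" "\<And>i. i \<in> A \<Longrightarrow> 0 \<le> p i \<and> p i \<le> 1" "t \<le> (\<Sum>i\<in>A. p i)"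
  shows "(1 - EE A p (\<lambda>c. if t \<le> real c then 1 else 0)) * ((\<Sum>i\<in>A. p i) - t)^2 \<le> (\<Sum>i\<in>A. p i * (1 - p i))"
proof -
  define m where "m = (\<Sum>i\<in>A. p i)"
  have "1 - EE A p (\<lambda>c. if t \<le> real c then 1 else 0) = EE A p (\<lambda>c. if t \<le> real c then 0 else 1)"
    using EE_diff[of A p "\<lambda>_. 1" "\<lambda>c. if t \<le> real c then 1 else 0"] EE_const[OF assms(1)]
    by (simp add: if_distrib cong: if_cong)
  then have "(1 - EE A p (\<lambda>c. if t \<le> real c then 1 else 0)) * (m - t)^2 = EE A p (\<lambda>c. (m - t)^2 * (if t \<le> real c then 0 else 1))"
    using EE_cmult[of A p "(m - t)^2" "\<lambda>c. if t \<le> real c then 0 else 1"] by (simp add: mult.commute)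
  also have "\<dots> \<le> EE A p (\<lambda>c. (real c - m)^2)"
  proof (rule EE_mono_h[OF assms(2)])
    fix c
    show "(m - t)^2 * (if t \<le> real c then 0 else 1) \<le> (real c - m)^2"
    proof (cases "t \<le> real c")
      case False
      then have "0 \<le> m - t" "m - t \<le> m - real c" using assms(3) m_def by auto
      then have "(m - t)^2 \<le> (m - real c)^2" by (intro power_mono) auto
      then show ?thesis using False by (simp add: power2_commute)
    qed auto
  qed auto
  finally show ?thesis using EE_var[OF assms(1), of p] by (simp add: m_def)
qed

lemma P_le1: 
  fixes P :: "signal \<Rightarrow> state \<Rightarrow> real"
  assumes "\<And>s x. P s x \<ge> 0" "\<And>x. P Sh x + P Sl x = 1"
  shows "P s w \<le> 1"
proof -
  have "P Sh w \<le> 1" "P Sl w \<le> 1" using assms(1)[of Sh w] assms(1)[of Sl w] assms(2)[of w] by linarith+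
  then show ?thesis by (cases s) auto
qed

lemma vote_prob_01:
  assumes "\<And>s x. P s x \<ge> 0" "\<And>x. P Sh x + P Sl x = 1" "valid_profile N \<sigma>" "n < N"
  shows "0 \<le> vote_prob P \<sigma> n w \<and> vote_prob P \<sigma> n w \<le> 1"
proof -
  have a: "0 \<le> \<sigma> n s" "\<sigma> n s \<le> 1" for s using assms(3,4) unfolding valid_profile_def by auto
  have "P Sh w * \<sigma> n Sh \<le> P Sh w" "P Sl w * \<sigma> n Sl \<le> P Sl w"
    using a assms(1) by (simp_all add: mult_left_le)
  moreover have "0 \<le> P Sh w * \<sigma> n Sh + P Sl w * \<sigma> n Sl"
    using a assms(1)[of Sh w] assms(1)[of Sl w] by (intro add_nonneg_nonneg mult_nonneg_nonneg) auto
  ultimately show ?thesis unfolding vote_prob_def using assms(2)[of w] by linarith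
qed

lemma lamA_01:
  assumes "\<And>s x. P s x \<ge> 0" "\<And>x. P Sh x + P Sl x = 1" "valid_profile N \<sigma>"
  shows "0 \<le> lamA N \<mu> P \<sigma> w \<and> lamA N \<mu> P \<sigma> w \<le> 1"
proof -
  have pr: "\<And>i. i \<in> {..<N} \<Longrightarrow> 0 \<le> vote_prob P \<sigma> i w \<and> vote_prob P \<sigma> i w \<le> 1"
    using vote_prob_01[of P N \<sigma> _ w, OF assms] by auto
  have "0 \<le> EE {..<N} (\<lambda>n. vote_prob P \<sigma> n w) (\<lambda>c. if \<mu> * real N \<le> real c then 1 else 0)"
    by (rule EE_nonneg[OF pr]) auto
  moreover have "EE {..<N} (\<lambda>n. vote_prob P \<sigma> n w) (\<lambda>c. if \<mu> * real N \<le> real c then 1 else 0) \<le> EE {..<N} (\<lambda>n. vote_prob P \<sigma> n w) (\<lambda>_. 1)"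
    by (rule EE_mono_h[OF pr]) auto
  ultimately show ?thesis unfolding lamA_EE by (simp add: EE_const)
qed

lemma lamA_mono:
  assumes "\<And>s x. P s x \<ge> 0" "\<And>x. P Sh x + P Sl x = 1" "valid_profile N \<sigma>" "valid_profile N \<sigma>'"
    "\<And>n s. n < N \<Longrightarrow> \<sigma>' n s \<le> \<sigma> n s"
  shows "lamA N \<mu> P \<sigma>' w \<le> lamA N \<mu> P \<sigma> w"
  unfolding lamA_EE
proof (rule EE_mono_p)
  fix i assume i: "i \<in> {..<N}"
  have "vote_prob P \<sigma>' i w \<le> vote_prob P \<sigma> i w"
    unfolding vote_prob_def using assms(1,5) i by (auto intro!: add_mono mult_left_mono)
  then show "0 \<le> vote_prob P \<sigma>' i w \<and> vote_prob P \<sigma>' i w \<le> vote_prob P \<sigma> i w \<and> vote_prob P \<sigma> i w \<le> 1"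
    using vote_prob_01[of P N \<sigma> i w, OF assms(1,2,3)] vote_prob_01[of P N \<sigma>' i w, OF assms(1,2,4)] i by auto
qed (auto simp: mono_def)

lemma exp_util_eq:
  "exp_util N \<mu> pr P vn \<sigma> = pr L * (lamA N \<mu> P \<sigma> L * real (vn L Acc) + (1 - lamA N \<mu> P \<sigma> L) * real (vn L Rej))
     + pr H * (lamA N \<mu> P \<sigma> H * real (vn H Acc) + (1 - lamA N \<mu> P \<sigma> H) * real (vn H Rej))"
  unfolding exp_util_def lamR_def by simp

lemma fidelity_eq: "fidelity N \<mu> pr P \<sigma> = pr L * (1 - lamA N \<mu> P \<sigma> L) + pr H * lamA N \<mu> P \<sigma> H"
  unfolding fidelity_def lamR_def by simp



lemma h1: fixes x a d B :: real assumes "x \<ge> -a" "a \<ge> 0" "-B \<le> d" "d \<le> 0" shows "x * d \<le> a * B"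
proof (cases "x \<ge> 0")
  case True then show ?thesis using assms by (smt (verit) mult_nonneg_nonpos mult_nonneg_nonneg)
next
  case False
  then have "(-x) * (-d) \<le> a * B" using assms by (intro mult_mono) auto
  then show ?thesis by simp
qed

lemma h2: fixes y b d B :: real assumes "y \<le> b" "b \<ge> 0" "0 \<le> d" "d \<le> B" shows "y * d \<le> b * B"
proof (cases "y \<ge> 0")
  case True then show ?thesis using assms by (intro mult_mono) auto
next
  case False then show ?thesis using assms by (smt (verit) mult_nonpos_nonneg mult_nonneg_nonneg)
qed

locale setting =
  fixes pL pH x y aL b B r :: real
  assumes pL: "pL > 0" and pH: "pH > 0" and xa: "x \<ge> -aL" and aL: "aL \<ge> 0" and yb: "y \<le> b" and b: "b \<ge> 0"
    and B: "B \<ge> 1" and r: "r = pL * aL + pH * b"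
begin

definition "gain dL dH = pL * x * dL + pH * y * dH"

lemma r_ge: "pL * aL * B \<le> B * r" "pH * b * B \<le> B * r" "0 \<le> r" "pL * aL * B + pH * b * B = B * r"
  using pL pH aL b B r by (auto simp: algebra_simps intro: mult_nonneg_nonneg)

lemma t1: "-B \<le> d \<Longrightarrow> d \<le> 0 \<Longrightarrow> pL * x * d \<le> pL * aL * B"
  using h1[OF xa aL, of B d] pL by (simp add: mult.assoc mult_left_mono)
lemma t2: "0 \<le> d \<Longrightarrow> d \<le> B \<Longrightarrow> pH * y * d \<le> pH * b * B"
  using h2[OF yb b, of d B] pH by (simp add: mult.assoc mult_left_mono)

lemma C1: assumes "1 \<le> dH" "dH \<le> B" "-B \<le> dL" "dL \<le> -1" shows "gain dL dH \<le> B * r"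
proof -
  have "pL * x * dL \<le> pL * aL * B" by (rule t1) (use assms in auto)
  moreover have "pH * y * dH \<le> pH * b * B" by (rule t2) (use assms in auto)
  ultimately show ?thesis using r_ge(4) unfolding gain_def by linarith
qed

lemma C2: assumes "1 \<le> dL0" "dL0 < dH0" "dH0 \<le> B" "1 \<le> dHm" "dHm \<le> B" "-B \<le> dLm" "dLm \<le> -1"
  "gain dLm dHm \<ge> 0" shows "gain dL0 dH0 \<le> (B + B * B) * r"
proof (cases "x \<le> 0")
  case True
  have "pL * x * dL0 \<le> 0" using True pL assms(1) by (simp add: mult_nonpos_nonneg mult_nonneg_nonpos)
  moreover have "pH * y * dH0 \<le> pH * b * B" by (rule t2) (use assms in auto)
  moreover have "0 \<le> B * B * r" using r_ge B by simp
  ultimately show ?thesis using r_ge unfolding gain_def by (simp add: algebra_simps)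
next
  case False
  have px: "0 < pL * x" using False pL by simp
  have "pL * x * 1 \<le> pL * x * (- dLm)" by (rule mult_left_mono) (use px assms(7) in auto)
  then have "pL * x \<le> pL * x * (- dLm)" by simp
  also have "\<dots> \<le> pH * y * dHm" using assms(8) unfolding gain_def by simp
  also have "\<dots> \<le> pH * b * B" by (rule t2) (use assms in auto)
  finally have X: "pL * x \<le> B * r" using r_ge by simp
  have "(pL * x) * dL0 \<le> (B * r) * B"
    by (rule mult_mono[of "pL * x" "B * r" dL0 B]) (use X assms px r_ge B in auto)
  moreover have "pH * y * dH0 \<le> pH * b * B" by (rule t2) (use assms in auto)
  ultimately show ?thesis using r_ge unfolding gain_def by (simp add: algebra_simps)
qed


lemma C3: assumes "1 \<le> dL0" "dL0 < dH0" "dH0 \<le> B" "-B \<le> dLm" "dLm < dHm" "dHm \<le> -1"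
  "gain dLm dHm \<ge> 0" shows "gain dL0 dH0 \<le> B * r"
proof (cases "x \<le> 0")
  case True
  have "pL * x * dL0 \<le> 0" using True pL assms(1) by (simp add: mult_nonpos_nonneg mult_nonneg_nonpos)
  moreover have "pH * y * dH0 \<le> pH * b * B" by (rule t2) (use assms in auto)
  ultimately show ?thesis using r_ge unfolding gain_def by (simp add: algebra_simps)
next
  case False
  define X where "X = pL * x"
  have X: "0 < X" using False pL X_def by simp
  show ?thesis
  proof (cases "y \<ge> 0")
    case True
    have "X * dLm < 0" using X assms by (simp add: mult_pos_neg)
    moreover have "pH * y * dHm \<le> 0" using True pH assms by (simp add: mult_nonneg_nonpos)
    ultimately show ?thesis using assms(7) unfolding gain_def X_def by simp
  next
    case False
    define Y where "Y = pH * (- y)"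
    have Y: "0 < Y" using False pH Y_def by (simp add: mult_pos_neg)
    have g0: "gain dL0 dH0 = X * dL0 - Y * dH0" unfolding gain_def X_def Y_def by simp
    have gm: "gain dLm dHm = X * dLm - Y * dHm" unfolding gain_def X_def Y_def by simp
    have "gain dL0 dH0 \<le> 0"
    proof (rule ccontr)
      assume "\<not> gain dL0 dH0 \<le> 0"
      then have "Y * dH0 < X * dL0" using g0 by simp
      moreover have "Y * dL0 < Y * dH0" using Y assms by simp
      ultimately have "Y * dL0 < X * dL0" by simp
      then have XY: "Y < X" using assms(1) by (simp add: mult_less_cancel_right)
      have "Y * (- dLm) < X * (- dLm)" using XY assms by (simp add: mult_less_cancel_right)
      moreover have "Y * (- dHm) < Y * (- dLm)" using Y assms by simp
      ultimately show False using assms(7) gm by (simp add: algebra_simps)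
    qed
    then show ?thesis using r_ge B by (smt (verit) mult_nonneg_nonneg)
  qed
qed

lemma C4: assumes "1 \<le> dL0" "1 \<le> dH0" "x \<le> 0" "y \<le> 0" shows "gain dL0 dH0 \<le> B * r"
proof -
  have "pL * x * dL0 \<le> 0" using assms pL by (simp add: mult_nonpos_nonneg mult_nonneg_nonpos)
  moreover have "pH * y * dH0 \<le> 0" using assms pH by (simp add: mult_nonpos_nonneg mult_nonneg_nonpos)
  ultimately show ?thesis using r_ge B unfolding gain_def by (smt (verit) mult_nonneg_nonneg)
qed

lemma C5: assumes "-B \<le> dL0" "dL0 \<le> -1" "-B \<le> dH0" "dH0 \<le> -1" "1 \<le> dHm" "dHm \<le> B" "-B \<le> dLm" "dLm \<le> -1"
  "gain dLm dHm \<ge> 0" shows "gain dL0 dH0 \<le> (B + B * B) * r"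
proof -
  have a: "pL * x * dL0 \<le> pL * aL * B" by (rule t1) (use assms in auto)
  show ?thesis
  proof (cases "y \<ge> 0")
    case True
    have "pH * y * dH0 \<le> 0" using True pH assms by (simp add: mult_nonneg_nonpos)
    moreover have "0 \<le> B * B * r" using r_ge B by simp
    ultimately show ?thesis using a r_ge unfolding gain_def by (simp add: algebra_simps)
  next
    case False
    define Y where "Y = pH * (- y)"
    have Y: "0 < Y" using False pH Y_def by (simp add: mult_pos_neg)
    have "Y * 1 \<le> Y * dHm" using Y assms by (intro mult_left_mono) auto
    also have "\<dots> \<le> pL * x * dLm" using assms(9) unfolding gain_def Y_def by simp
    also have "\<dots> \<le> pL * aL * B" by (rule t1) (use assms in auto)
    finally have YB: "Y \<le> B * r" using r_ge by simp
    have "Y * (- dH0) \<le> (B * r) * B" using YB Y assms by (intro mult_mono) auto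
    moreover have "pH * y * dH0 = Y * (- dH0)" unfolding Y_def by simp
    ultimately show ?thesis using a r_ge unfolding gain_def by (simp add: algebra_simps)
  qed
qed

lemma C6: assumes "-B \<le> dL0" "dL0 < dH0" "dH0 \<le> -1" "1 \<le> dLm" "dLm < dHm" "dHm \<le> B"
  "gain dLm dHm \<ge> 0" shows "gain dL0 dH0 \<le> B * r"
proof (cases "y \<ge> 0")
  case True
  have a: "pL * x * dL0 \<le> pL * aL * B" by (rule t1) (use assms in auto)
  have "pH * y * dH0 \<le> 0" using True pH assms by (simp add: mult_nonneg_nonpos)
  then show ?thesis using a r_ge unfolding gain_def by (simp add: algebra_simps)
next
  case False
  define Y where "Y = pH * (- y)"
  have Y: "0 < Y" using False pH Y_def by (simp add: mult_pos_neg)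
  show ?thesis
  proof (cases "x \<le> 0")
    case True
    have "pL * x * dLm \<le> 0" using True pL assms by (simp add: mult_nonpos_nonneg mult_nonneg_nonpos)
    moreover have "0 < Y * dHm" using Y assms by simp
    moreover have "pH * y * dHm = - (Y * dHm)" unfolding Y_def by simp
    ultimately show ?thesis using assms(7) unfolding gain_def by simp
  next
    case False
    define X where "X = pL * x"
    have X: "0 < X" using False pL X_def by simp
    have g0: "gain dL0 dH0 = X * dL0 - Y * dH0" unfolding gain_def X_def Y_def by simp
    have gm: "gain dLm dHm = X * dLm - Y * dHm" unfolding gain_def X_def Y_def by simp
    have "gain dL0 dH0 \<le> 0"
    proof (rule ccontr)
      assume "\<not> gain dL0 dH0 \<le> 0"
      then have "X * (- dL0) < Y * (- dH0)" using g0 by simp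
      moreover have "X * (- dH0) < X * (- dL0)" using X assms by simp
      ultimately have "X * (- dH0) < Y * (- dH0)" by simp
      then have XY: "X < Y" using assms by (simp add: mult_less_cancel_right)
      have "X * dLm < Y * dLm" using XY assms by (simp add: mult_less_cancel_right)
      moreover have "Y * dLm < Y * dHm" using Y assms by simp
      ultimately show False using assms(7) gm by (simp add: algebra_simps)
    qed
    then show ?thesis using r_ge B by (smt (verit) mult_nonneg_nonneg)
  qed
qed

lemma C7: assumes "dL0 \<le> -1" "dH0 \<le> -1" "x \<ge> 0" "y \<ge> 0" shows "gain dL0 dH0 \<le> B * r"
proof -
  have "pL * x * dL0 \<le> 0" using assms pL by (simp add: mult_nonneg_nonpos)
  moreover have "pH * y * dH0 \<le> 0" using assms pH by (simp add: mult_nonneg_nonpos)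
  ultimately show ?thesis using r_ge B unfolding gain_def by (smt (verit) mult_nonneg_nonneg)
qed

end


definition dLv :: "(state \<Rightarrow> outcome \<Rightarrow> nat) \<Rightarrow> real" where "dLv vn = real (vn L Acc) - real (vn L Rej)"
definition dHv :: "(state \<Rightarrow> outcome \<Rightarrow> nat) \<Rightarrow> real" where "dHv vn = real (vn H Acc) - real (vn H Rej)"

lemma fr_d: "friendly vn \<Longrightarrow> (\<And>w a. vn w a \<le> B) \<Longrightarrow> 1 \<le> dLv vn \<and> dLv vn < dHv vn \<and> dHv vn \<le> real B"
  unfolding friendly_def dLv_def dHv_def
proof -
  assume a: "vn L Acc < vn H Acc \<and> vn L Rej < vn L Acc \<and> vn H Rej < vn L Rej" "\<And>w a. vn w a \<le> B"
  have "vn H Acc \<le> B" using a(2) by auto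
  then show "1 \<le> real (vn L Acc) - real (vn L Rej) \<and> real (vn L Acc) - real (vn L Rej) < real (vn H Acc) - real (vn H Rej) \<and> real (vn H Acc) - real (vn H Rej) \<le> real B"
    using a(1) by linarith
qed

lemma un_d: "unfriendly vn \<Longrightarrow> (\<And>w a. vn w a \<le> B) \<Longrightarrow> - real B \<le> dLv vn \<and> dLv vn < dHv vn \<and> dHv vn \<le> -1"
  unfolding unfriendly_def dLv_def dHv_def
proof -
  assume a: "vn H Rej < vn L Rej \<and> vn H Acc < vn H Rej \<and> vn L Acc < vn H Acc" "\<And>w a. vn w a \<le> B"
  have "vn L Rej \<le> B" using a(2) by auto
  then show "- real B \<le> real (vn L Acc) - real (vn L Rej) \<and> real (vn L Acc) - real (vn L Rej) < real (vn H Acc) - real (vn H Rej) \<and> real (vn H Acc) - real (vn H Rej) \<le> -1"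
    using a(1) by linarith
qed

lemma co_d: "contingent vn \<Longrightarrow> (\<And>w a. vn w a \<le> B) \<Longrightarrow> - real B \<le> dLv vn \<and> dLv vn \<le> -1 \<and> 1 \<le> dHv vn \<and> dHv vn \<le> real B"
  unfolding contingent_def dLv_def dHv_def
proof -
  assume a: "vn H Rej < vn H Acc \<and> vn L Acc < vn L Rej" "\<And>w a. vn w a \<le> B"
  have "vn L Rej \<le> B" "vn H Acc \<le> B" using a(2) by auto
  then show "- real B \<le> real (vn L Acc) - real (vn L Rej) \<and> real (vn L Acc) - real (vn L Rej) \<le> -1 \<and> 1 \<le> real (vn H Acc) - real (vn H Rej) \<and> real (vn H Acc) - real (vn H Rej) \<le> real B"
    using a(1) by linarith
qed

lemma types_excl: "friendly vn \<Longrightarrow> \<not> contingent vn" "friendly vn \<Longrightarrow> \<not> unfriendly vn" "unfriendly vn \<Longrightarrow> \<not> contingent vn"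
  unfolding friendly_def unfriendly_def contingent_def by auto

lemma gain_eq: "exp_util N \<mu> pr P vn \<sigma>' - exp_util N \<mu> pr P vn \<sigma> =
   pr L * (lamA N \<mu> P \<sigma>' L - lamA N \<mu> P \<sigma> L) * dLv vn + pr H * (lamA N \<mu> P \<sigma>' H - lamA N \<mu> P \<sigma> H) * dHv vn"
  unfolding exp_util_eq dLv_def dHv_def by (simp add: algebra_simps)

lemma part1_N:
  fixes pr :: "state \<Rightarrow> real" and P :: "signal \<Rightarrow> state \<Rightarrow> real"
  assumes prior: "pr L > 0" "pr H > 0" "pr L + pr H = 1"
    and signal: "\<And>s x. P s x \<ge> 0" "\<And>x. P Sh x + P Sl x = 1"
    and B: "B > 0"
    and inst: "is_instance N B \<alpha>F \<alpha>U v"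
    and reg: "regular N v \<sigma>"
  shows "strong_BNE N \<mu> pr P v \<sigma> ((real B + real B * real B) * (1 - fidelity N \<mu> pr P \<sigma>))"
proof -
  let ?r = "1 - fidelity N \<mu> pr P \<sigma>"
  let ?e = "(real B + real B * real B) * ?r"
  have vb: "\<And>n w a. n < N \<Longrightarrow> v n w a \<le> B" using inst unfolding is_instance_def by auto
  have htyp: "\<And>n. n < N \<Longrightarrow> friendly (v n) \<or> unfriendly (v n) \<or> contingent (v n)"
    using inst unfolding is_instance_def by auto
  have vl: "valid_profile N \<sigma>" using reg unfolding regular_def by auto
  have fr1: "\<And>n s. n < N \<Longrightarrow> friendly (v n) \<Longrightarrow> \<sigma> n s = 1"
   and un0: "\<And>n s. n < N \<Longrightarrow> unfriendly (v n) \<Longrightarrow> \<sigma> n s = 0"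
    using reg unfolding regular_def by auto
  show ?thesis
    unfolding strong_BNE_def
  proof
    assume "\<exists>D \<sigma>'. D \<subseteq> {..<N} \<and> valid_profile N \<sigma>' \<and> (\<forall>n<N. n \<notin> D \<longrightarrow> \<sigma>' n = \<sigma> n) \<and>
          (\<forall>n\<in>D. exp_util N \<mu> pr P (v n) \<sigma>' \<ge> exp_util N \<mu> pr P (v n) \<sigma>) \<and>
          (\<exists>n\<in>D. exp_util N \<mu> pr P (v n) \<sigma>' > exp_util N \<mu> pr P (v n) \<sigma> + ?e)"
    then obtain D \<sigma>' n0 where D: "D \<subseteq> {..<N}" and vl': "valid_profile N \<sigma>'"
      and out: "\<forall>n<N. n \<notin> D \<longrightarrow> \<sigma>' n = \<sigma> n"
      and weak: "\<forall>n\<in>D. exp_util N \<mu> pr P (v n) \<sigma>' \<ge> exp_util N \<mu> pr P (v n) \<sigma>"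
      and n0: "n0 \<in> D" and strict: "exp_util N \<mu> pr P (v n0) \<sigma>' > exp_util N \<mu> pr P (v n0) \<sigma> + ?e"
      by blast
    define aL where "aL = lamA N \<mu> P \<sigma> L"
    define aH where "aH = lamA N \<mu> P \<sigma> H"
    define bL where "bL = lamA N \<mu> P \<sigma>' L"
    define bH where "bH = lamA N \<mu> P \<sigma>' H"
    have aLr: "0 \<le> aL" "aL \<le> 1" using lamA_01[where P=P and w=L and \<mu>=\<mu>, OF signal vl] aL_def by auto
    have aHr: "0 \<le> aH" "aH \<le> 1" using lamA_01[where P=P and w=H and \<mu>=\<mu>, OF signal vl] aH_def by auto
    have bLr: "0 \<le> bL" "bL \<le> 1" using lamA_01[where P=P and w=L and \<mu>=\<mu>, OF signal vl'] bL_def by auto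
    have bHr: "0 \<le> bH" "bH \<le> 1" using lamA_01[where P=P and w=H and \<mu>=\<mu>, OF signal vl'] bH_def by auto
    have rr: "?r = pr L * aL + pr H * (1 - aH)"
      unfolding fidelity_eq aL_def aH_def using prior(3) by (simp add: algebra_simps)
    interpret S: setting "pr L" "pr H" "bL - aL" "bH - aH" aL "1 - aH" "real B" ?r
      by unfold_locales (use prior aLr aHr bLr bHr B rr in auto)
    have G: "\<And>n. exp_util N \<mu> pr P (v n) \<sigma>' - exp_util N \<mu> pr P (v n) \<sigma> = S.gain (dLv (v n)) (dHv (v n))"
      unfolding gain_eq S.gain_def by (simp add: aL_def aH_def bL_def bH_def)
    have wk: "\<And>m. m \<in> D \<Longrightarrow> 0 \<le> S.gain (dLv (v m)) (dHv (v m))" using weak G by (smt (verit))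
    have st: "S.gain (dLv (v n0)) (dHv (v n0)) > ?e" using strict G[of n0] by simp
    have n0N: "n0 < N" using n0 D by auto
    have Br: "real B * ?r \<le> ?e" using S.r_ge(3) B by (simp add: algebra_simps)
    have vbn: "\<And>n. n < N \<Longrightarrow> (\<And>w a. v n w a \<le> B)" using vb by auto
    show False
    proof (cases "contingent (v n0)")
      case True
      show False using S.C1[of "dHv (v n0)" "dLv (v n0)"] co_d[OF True vbn[OF n0N]] st Br by linarith
    next
      case nc0: False
      show False
      proof (cases "friendly (v n0)")
        case fr0: True
        note d0 = fr_d[OF fr0 vbn[OF n0N]]
        show False
        proof (cases "\<exists>m\<in>D. contingent (v m)")
          case True
          then obtain m where m: "m \<in> D" "contingent (v m)" by blast
          have mN: "m < N" using m D by auto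
          show False using S.C2[of "dLv (v n0)" "dHv (v n0)" "dHv (v m)" "dLv (v m)"] d0
              co_d[OF m(2) vbn[OF mN]] wk[OF m(1)] st by linarith
        next
          case nc: False
          show False
          proof (cases "\<exists>m\<in>D. unfriendly (v m)")
            case True
            then obtain m where m: "m \<in> D" "unfriendly (v m)" by blast
            have mN: "m < N" using m D by auto
            show False using S.C3[of "dLv (v n0)" "dHv (v n0)" "dLv (v m)" "dHv (v m)"] d0
                un_d[OF m(2) vbn[OF mN]] wk[OF m(1)] st Br by linarith
          next
            case False
            have allf: "\<And>m. m \<in> D \<Longrightarrow> friendly (v m)" using nc False htyp D by blast
            have le: "\<And>n s. n < N \<Longrightarrow> \<sigma>' n s \<le> \<sigma> n s"
            proof -
              fix n s assume nN: "n < N"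
              show "\<sigma>' n s \<le> \<sigma> n s"
              proof (cases "n \<in> D")
                case True
                then show ?thesis using fr1[OF nN allf[OF True]] vl' nN unfolding valid_profile_def by auto
              qed (use out nN in auto)
            qed
            have "bL \<le> aL" "bH \<le> aH" unfolding aL_def bL_def aH_def bH_def
              by (rule lamA_mono[where P=P, OF signal vl vl' le]; simp)+
            then show False using S.C4[of "dLv (v n0)" "dHv (v n0)"] d0 st Br by linarith
          qed
        qed
      next
        case nf0: False
        then have un0': "unfriendly (v n0)" using htyp[OF n0N] nc0 by blast
        note d0 = un_d[OF un0' vbn[OF n0N]]
        show False
        proof (cases "\<exists>m\<in>D. contingent (v m)")
          case True
          then obtain m where m: "m \<in> D" "contingent (v m)" by blast
          have mN: "m < N" using m D by auto
          show False using S.C5[of "dLv (v n0)" "dHv (v n0)" "dHv (v m)" "dLv (v m)"] d0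
              co_d[OF m(2) vbn[OF mN]] wk[OF m(1)] st by linarith
        next
          case nc: False
          show False
          proof (cases "\<exists>m\<in>D. friendly (v m)")
            case True
            then obtain m where m: "m \<in> D" "friendly (v m)" by blast
            have mN: "m < N" using m D by auto
            show False using S.C6[of "dLv (v n0)" "dHv (v n0)" "dLv (v m)" "dHv (v m)"] d0
                fr_d[OF m(2) vbn[OF mN]] wk[OF m(1)] st Br by linarith
          next
            case False
            have allu: "\<And>m. m \<in> D \<Longrightarrow> unfriendly (v m)" using nc False htyp D by blast
            have le: "\<And>n s. n < N \<Longrightarrow> \<sigma> n s \<le> \<sigma>' n s"
            proof -
              fix n s assume nN: "n < N"
              show "\<sigma> n s \<le> \<sigma>' n s"
              proof (cases "n \<in> D")
                case True
                then show ?thesis using un0[OF nN allu[OF True]] vl' nN unfolding valid_profile_def by auto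
              qed (use out nN in auto)
            qed
            have "aL \<le> bL" "aH \<le> bH" unfolding aL_def bL_def aH_def bH_def
              by (rule lamA_mono[where P=P, OF signal vl' vl le]; simp)+
            then show False using S.C7[of "dLv (v n0)" "dHv (v n0)"] d0 st Br by linarith
          qed
        qed
      qed
    qed
  qed
qed



lemma exists_xy:
  fixes pl ph t :: real
  assumes "0 \<le> pl" "pl < ph" "ph \<le> 1" "0 < t" "t < 1"
  shows "\<exists>x0 y0 d. 0 \<le> x0 \<and> x0 \<le> 1 \<and> 0 \<le> y0 \<and> y0 \<le> 1 \<and> d > 0 \<and>
     t + d \<le> ph * x0 + (1 - ph) * y0 \<and> pl * x0 + (1 - pl) * y0 \<le> t - d"
proof -
  define z where "z = min t (1 - t)"
  define mb where "mb = (ph + pl) / 2"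
  define y0 where "y0 = t - z * mb"
  define x0 where "x0 = y0 + z"
  define d where "d = z * (ph - pl) / 2"
  have z: "0 < z" "z \<le> t" "z \<le> 1 - t" using assms z_def by auto
  have mb: "0 \<le> mb" "mb \<le> 1" using assms mb_def by auto
  have zm: "z * mb \<le> z" "0 \<le> z * mb" using z mb by (simp_all add: mult_left_le)
  have zm2: "z * mb \<le> t" using zm z by linarith
  have e1: "ph * x0 + (1 - ph) * y0 = t + d" unfolding x0_def y0_def d_def mb_def by (simp add: field_simps)
  have e2: "pl * x0 + (1 - pl) * y0 = t - d" unfolding x0_def y0_def d_def mb_def by (simp add: field_simps)
  have "0 \<le> x0" "x0 \<le> 1" "0 \<le> y0" "y0 \<le> 1" unfolding x0_def y0_def using z zm zm2 by linarith+
  moreover have "d > 0" unfolding d_def using z assms by simp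
  ultimately show ?thesis using e1 e2 by (intro exI[of _ x0] exI[of _ y0] exI[of _ d]) auto
qed

lemma h3: fixes u a e c B :: real
  assumes "u \<ge> a - e" "a \<ge> 0" "e \<ge> 0" "1 \<le> c" "c \<le> B"
  shows "u * c \<ge> a - e * (1 + B)"
proof (cases "u \<ge> 0")
  case True
  have "u * 1 \<le> u * c" using True assms by (intro mult_left_mono) auto
  moreover have "0 \<le> e * B" using assms by simp
  moreover have "e * (1 + B) = e + e * B" by (simp add: algebra_simps)
  ultimately show ?thesis using assms by linarith
next
  case False
  have "u * B \<le> u * c" using False assms by (intro mult_left_mono_neg) auto
  moreover have "(a - e) * B \<le> u * B" using assms by (intro mult_right_mono) auto
  moreover have "a \<le> e" using False assms by linarith
  moreover have "a \<le> a * B" using mult_left_mono[of 1 B a] assms by simp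
  moreover have "(a - e) * B = a * B - e * B" by (simp add: algebra_simps)
  moreover have "e * (1 + B) = e + e * B" by (simp add: algebra_simps)
  ultimately show ?thesis using assms by linarith
qed

lemma sum_ind: fixes N :: nat shows "(\<Sum>n<N. if Q n then 1 else 0 :: real) = real (card {n. n < N \<and> Q n})"
proof -
  have "(\<Sum>n<N. if Q n then 1 else 0 :: real) = (\<Sum>n\<in>{..<N} \<inter> {n. Q n}. 1)"
    using sum.inter_restrict[OF finite_lessThan[of N], of "\<lambda>_. 1::real" "{n. Q n}"] by simp
  also have "{..<N} \<inter> {n. Q n} = {n. n < N \<and> Q n}" by auto
  finally show ?thesis by simp
qed

lemma card_real: assumes "card X = nat \<lfloor>a * real N\<rfloor>" "a \<ge> 0"
  shows "real (card X) \<le> a * real N" "a * real N - 1 < real (card X)"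
proof -
  have "0 \<le> \<lfloor>a * real N\<rfloor>" using assms by simp
  then have "real (card X) = real_of_int \<lfloor>a * real N\<rfloor>" using assms(1) by simp
  then show "real (card X) \<le> a * real N" "a * real N - 1 < real (card X)" by linarith+
qed



lemma part2_N:
  fixes pr :: "state \<Rightarrow> real" and P :: "signal \<Rightarrow> state \<Rightarrow> real" and \<delta> \<delta>0 x0 y0 :: real
  assumes prior: "pr L > 0" "pr H > 0" "pr L + pr H = 1"
    and signal: "\<And>s x. P s x \<ge> 0" "\<And>x. P Sh x + P Sl x = 1"
    and B: "B > 0"
    and fr: "\<alpha>F \<ge> 0" "\<alpha>U \<ge> 0" "\<alpha>F + \<alpha>U < 1"
    and inst: "is_instance N B \<alpha>F \<alpha>U v"
    and reg: "regular N v \<sigma>"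
    and xy: "0 \<le> x0" "x0 \<le> 1" "0 \<le> y0" "y0 \<le> 1"
    and d0: "\<delta>0 > 0"
    and hH: "\<mu> + \<delta>0 \<le> \<alpha>F + (1 - \<alpha>F - \<alpha>U) * (P Sh H * x0 + P Sl H * y0)"
    and hL: "\<alpha>F + (1 - \<alpha>F - \<alpha>U) * (P Sh L * x0 + P Sl L * y0) \<le> \<mu> - \<delta>0"
    and Npos: "N > 0" and dpos: "\<delta> > 0"
    and hfid: "fidelity N \<mu> pr P \<sigma> \<le> 1 - \<delta>"
    and hN: "2 \<le> real N * \<delta>0"
    and heta: "4 / (\<delta>0^2 * real N) * (1 + real B) \<le> \<delta> / 2"
  shows "\<not> strong_BNE N \<mu> pr P v \<sigma> (\<delta> / 4)"
proof -
  define \<sigma>' where "\<sigma>' = (\<lambda>n. if contingent (v n) then (\<lambda>s. if s = Sh then x0 else y0) else \<sigma> n)"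
  define D where "D = {n. n < N \<and> contingent (v n)}"
  define q where "q w = P Sh w * x0 + P Sl w * y0" for w
  define \<eta> where "\<eta> = 4 / (\<delta>0^2 * real N)"
  have vb: "\<And>n w a. n < N \<Longrightarrow> v n w a \<le> B" using inst unfolding is_instance_def by auto
  have htyp: "\<And>n. n < N \<Longrightarrow> friendly (v n) \<or> unfriendly (v n) \<or> contingent (v n)"
    using inst unfolding is_instance_def by auto
  have cF: "card {n. n < N \<and> friendly (v n)} = nat \<lfloor>\<alpha>F * real N\<rfloor>"
   and cU: "card {n. n < N \<and> unfriendly (v n)} = nat \<lfloor>\<alpha>U * real N\<rfloor>"
    using inst unfolding is_instance_def by auto
  define nF where "nF = real (card {n. n < N \<and> friendly (v n)})"
  define nU where "nU = real (card {n. n < N \<and> unfriendly (v n)})"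
  have nF: "nF \<le> \<alpha>F * real N" "\<alpha>F * real N - 1 < nF" using card_real[OF cF fr(1)] nF_def by auto
  have nU: "nU \<le> \<alpha>U * real N" "\<alpha>U * real N - 1 < nU" using card_real[OF cU fr(2)] nU_def by auto
  have vl: "valid_profile N \<sigma>" using reg unfolding regular_def by auto
  have fr1: "\<And>n s. n < N \<Longrightarrow> friendly (v n) \<Longrightarrow> \<sigma> n s = 1"
   and un0: "\<And>n s. n < N \<Longrightarrow> unfriendly (v n) \<Longrightarrow> \<sigma> n s = 0"
    using reg unfolding regular_def by auto
  have vl': "valid_profile N \<sigma>'" using vl xy unfolding valid_profile_def \<sigma>'_def by auto
  have q01: "0 \<le> q w" "q w \<le> 1" for w
  proof -
    have "P Sh w * x0 \<le> P Sh w" "P Sl w * y0 \<le> P Sl w"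
      using xy signal(1)[of Sh w] signal(1)[of Sl w] by (simp_all add: mult_left_le)
    moreover have "0 \<le> P Sh w * x0 + P Sl w * y0"
      using xy signal(1)[of Sh w] signal(1)[of Sl w] by (intro add_nonneg_nonneg mult_nonneg_nonneg) auto
    ultimately show "0 \<le> q w" "q w \<le> 1" unfolding q_def using signal(2)[of w] by linarith+
  qed
  have vp: "vote_prob P \<sigma>' n w = q w + (1 - q w) * (if friendly (v n) then 1 else 0) - q w * (if unfriendly (v n) then 1 else 0)"
    if nN: "n < N" for n w
  proof -
    consider "friendly (v n)" | "unfriendly (v n)" | "contingent (v n)" using htyp[OF nN] by blast
    then show ?thesis
    proof cases
      case 1
      then show ?thesis using types_excl(1,2)[OF 1] fr1[OF nN 1] signal(2)[of w]
        unfolding vote_prob_def \<sigma>'_def by simp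
    next
      case 2
      then show ?thesis using types_excl(3)[OF 2] types_excl(2)[of "v n"] un0[OF nN 2]
        unfolding vote_prob_def \<sigma>'_def by auto
    next
      case 3
      then show ?thesis using types_excl(1)[of "v n"] types_excl(3)[of "v n"]
        unfolding vote_prob_def \<sigma>'_def q_def by auto
    qed
  qed
  have msum: "(\<Sum>n<N. vote_prob P \<sigma>' n w) = real N * q w + (1 - q w) * nF - q w * nU" for w
  proof -
    have "(\<Sum>n<N. vote_prob P \<sigma>' n w) = (\<Sum>n<N. q w + (1 - q w) * (if friendly (v n) then 1 else 0) - q w * (if unfriendly (v n) then 1 else 0))"
      using vp by (intro sum.cong) auto
    also have "\<dots> = real N * q w + (1 - q w) * (\<Sum>n<N. if friendly (v n) then 1 else 0) - q w * (\<Sum>n<N. if unfriendly (v n) then 1 else 0)"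
      by (simp add: sum_subtractf sum.distrib sum_distrib_left)
    finally show ?thesis unfolding nF_def nU_def sum_ind by simp
  qed
  have aC: "0 < 1 - \<alpha>F - \<alpha>U" using fr by simp
  have mH: "real N * \<delta>0 / 2 \<le> (\<Sum>n<N. vote_prob P \<sigma>' n H) - \<mu> * real N"
  proof -
    have a1: "(1 - q H) * (\<alpha>F * real N - 1) \<le> (1 - q H) * nF" using q01 nF by (intro mult_left_mono) auto
    have a2: "q H * nU \<le> q H * (\<alpha>U * real N)" using q01 nU by (intro mult_left_mono) auto
    have a3: "real N * (\<mu> + \<delta>0) \<le> real N * (\<alpha>F + (1 - \<alpha>F - \<alpha>U) * q H)" using hH unfolding q_def by (intro mult_left_mono) auto
    have e: "real N * q H + (1 - q H) * (\<alpha>F * real N - 1) - q H * (\<alpha>U * real N) = real N * (\<alpha>F + (1 - \<alpha>F - \<alpha>U) * q H) - (1 - q H)"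
      by (simp add: algebra_simps)
    show ?thesis unfolding msum using a1 a2 a3 e q01[of H] hN by (simp add: algebra_simps) 
  qed
  have mL: "real N * \<delta>0 / 2 \<le> \<mu> * real N - (\<Sum>n<N. vote_prob P \<sigma>' n L)"
  proof -
    have a1: "(1 - q L) * nF \<le> (1 - q L) * (\<alpha>F * real N)" using q01 nF by (intro mult_left_mono) auto
    have a2: "q L * (\<alpha>U * real N - 1) \<le> q L * nU" using q01 nU by (intro mult_left_mono) auto
    have a3: "real N * (\<alpha>F + (1 - \<alpha>F - \<alpha>U) * q L) \<le> real N * (\<mu> - \<delta>0)" using hL unfolding q_def by (intro mult_left_mono) auto
    have e: "real N * q L + (1 - q L) * (\<alpha>F * real N) - q L * (\<alpha>U * real N - 1) = real N * (\<alpha>F + (1 - \<alpha>F - \<alpha>U) * q L) + q L"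
      by (simp add: algebra_simps)
    show ?thesis unfolding msum using a1 a2 a3 e q01[of L] hN by (simp add: algebra_simps)
  qed
  have pr01: "\<And>i. i \<in> {..<N} \<Longrightarrow> 0 \<le> vote_prob P \<sigma>' i w \<and> vote_prob P \<sigma>' i w \<le> 1" for w
    using vote_prob_01[where P=P and w=w, OF signal vl'] by auto
  have Vle: "(\<Sum>i<N. vote_prob P \<sigma>' i w * (1 - vote_prob P \<sigma>' i w)) \<le> real N" for w
  proof -
    have "(\<Sum>i<N. vote_prob P \<sigma>' i w * (1 - vote_prob P \<sigma>' i w)) \<le> (\<Sum>i<N. 1)"
    proof (rule sum_mono)
      fix i assume "i \<in> {..<N}"
      then have "0 \<le> vote_prob P \<sigma>' i w" "vote_prob P \<sigma>' i w \<le> 1" using pr01 by auto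
      then show "vote_prob P \<sigma>' i w * (1 - vote_prob P \<sigma>' i w) \<le> 1"
        by (smt (verit) mult_left_le mult_nonneg_nonneg)
    qed
    then show ?thesis by simp
  qed
  have Nd: "0 \<le> real N * \<delta>0" using d0 by simp
  have tH: "\<mu> * real N \<le> (\<Sum>i<N. vote_prob P \<sigma>' i H)" using mH Nd by linarith
  have tL: "(\<Sum>i<N. vote_prob P \<sigma>' i L) \<le> \<mu> * real N" using mL Nd by linarith
  have K: "0 < (real N * \<delta>0 / 2)^2" using d0 Npos by simp
  have Keta: "(real N * \<delta>0 / 2)^2 * \<eta> = real N" unfolding \<eta>_def using d0 Npos by (simp add: field_simps power2_eq_square)
  have bH: "1 - lamA N \<mu> P \<sigma>' H \<le> \<eta>"
  proof -
    have c: "(1 - lamA N \<mu> P \<sigma>' H) * ((\<Sum>i<N. vote_prob P \<sigma>' i H) - \<mu> * real N)^2 \<le> real N"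
    proof -
      have "(1 - EE {..<N} (\<lambda>n. vote_prob P \<sigma>' n H) (\<lambda>c. if \<mu> * real N \<le> real c then 1 else 0)) * ((\<Sum>i<N. vote_prob P \<sigma>' i H) - \<mu> * real N)^2 \<le> (\<Sum>i<N. vote_prob P \<sigma>' i H * (1 - vote_prob P \<sigma>' i H))"
        by (rule cheb_lower) (use pr01 tH in auto)
      then show ?thesis using Vle[of H] unfolding lamA_EE by simp
    qed
    have l: "0 \<le> 1 - lamA N \<mu> P \<sigma>' H" using lamA_01[where P=P and w=H and \<mu>=\<mu>, OF signal vl'] by simp
    have "(real N * \<delta>0 / 2)^2 \<le> ((\<Sum>i<N. vote_prob P \<sigma>' i H) - \<mu> * real N)^2"
      using mH d0 by (intro power_mono) auto
    then have "(1 - lamA N \<mu> P \<sigma>' H) * (real N * \<delta>0 / 2)^2 \<le> real N"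
      using c l by (meson mult_left_mono order_trans)
    then have "(1 - lamA N \<mu> P \<sigma>' H) * (real N * \<delta>0 / 2)^2 \<le> \<eta> * (real N * \<delta>0 / 2)^2"
      using Keta by (simp add: mult.commute)
    then show ?thesis using K by simp
  qed
  have bL: "lamA N \<mu> P \<sigma>' L \<le> \<eta>"
  proof -
    have c: "lamA N \<mu> P \<sigma>' L * (\<mu> * real N - (\<Sum>i<N. vote_prob P \<sigma>' i L))^2 \<le> real N"
    proof -
      have "EE {..<N} (\<lambda>n. vote_prob P \<sigma>' n L) (\<lambda>c. if \<mu> * real N \<le> real c then 1 else 0) * (\<mu> * real N - (\<Sum>i<N. vote_prob P \<sigma>' i L))^2 \<le> (\<Sum>i<N. vote_prob P \<sigma>' i L * (1 - vote_prob P \<sigma>' i L))"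
        by (rule cheb_upper) (use pr01 tL in auto)
      then show ?thesis using Vle[of L] unfolding lamA_EE by simp
    qed
    have l: "0 \<le> lamA N \<mu> P \<sigma>' L" using lamA_01[where P=P and w=L and \<mu>=\<mu>, OF signal vl'] by simp
    have "(real N * \<delta>0 / 2)^2 \<le> (\<mu> * real N - (\<Sum>i<N. vote_prob P \<sigma>' i L))^2"
      using mL d0 by (intro power_mono) auto
    then have "lamA N \<mu> P \<sigma>' L * (real N * \<delta>0 / 2)^2 \<le> real N"
      using c l by (meson mult_left_mono order_trans)
    then have "lamA N \<mu> P \<sigma>' L * (real N * \<delta>0 / 2)^2 \<le> \<eta> * (real N * \<delta>0 / 2)^2"
      using Keta by (simp add: mult.commute)
    then show ?thesis using K by simp
  qed
  have eta0: "0 \<le> \<eta>" unfolding \<eta>_def by simp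
  define aL where "aL = lamA N \<mu> P \<sigma> L"
  define aH where "aH = lamA N \<mu> P \<sigma> H"
  have aLr: "0 \<le> aL" "aL \<le> 1" using lamA_01[where P=P and w=L and \<mu>=\<mu>, OF signal vl] aL_def by auto
  have aHr: "0 \<le> aH" "aH \<le> 1" using lamA_01[where P=P and w=H and \<mu>=\<mu>, OF signal vl] aH_def by auto
  have rr: "\<delta> \<le> pr L * aL + pr H * (1 - aH)"
    using hfid unfolding fidelity_eq aL_def aH_def using prior(3) by (simp add: algebra_simps)
  have gainD: "exp_util N \<mu> pr P (v n) \<sigma>' - exp_util N \<mu> pr P (v n) \<sigma> \<ge> \<delta> / 2" if nD: "n \<in> D" for n
  proof -
    have nN: "n < N" and cn: "contingent (v n)" using nD D_def by auto
    have dd: "- real B \<le> dLv (v n)" "dLv (v n) \<le> -1" "1 \<le> dHv (v n)" "dHv (v n) \<le> real B"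
      using co_d[OF cn, of B] vb[OF nN] by auto
    have g1: "(aL - lamA N \<mu> P \<sigma>' L) * (- dLv (v n)) \<ge> aL - \<eta> * (1 + real B)"
      by (rule h3) (use bL aLr eta0 dd in auto)
    have g2: "(lamA N \<mu> P \<sigma>' H - aH) * dHv (v n) \<ge> (1 - aH) - \<eta> * (1 + real B)"
      by (rule h3) (use bH aHr eta0 dd in auto)
    have "exp_util N \<mu> pr P (v n) \<sigma>' - exp_util N \<mu> pr P (v n) \<sigma>
        = pr L * ((aL - lamA N \<mu> P \<sigma>' L) * (- dLv (v n))) + pr H * ((lamA N \<mu> P \<sigma>' H - aH) * dHv (v n))"
      unfolding gain_eq aL_def aH_def by (simp add: algebra_simps)
    also have "\<dots> \<ge> pr L * (aL - \<eta> * (1 + real B)) + pr H * ((1 - aH) - \<eta> * (1 + real B))"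
      using g1 g2 prior by (intro add_mono mult_left_mono) auto
    finally have "exp_util N \<mu> pr P (v n) \<sigma>' - exp_util N \<mu> pr P (v n) \<sigma> \<ge>
        pr L * aL + pr H * (1 - aH) - (pr L + pr H) * (\<eta> * (1 + real B))" by (simp add: algebra_simps)
    moreover have "(pr L + pr H) * (\<eta> * (1 + real B)) = \<eta> * (1 + real B)" using prior(3) by simp
    moreover have "\<eta> * (1 + real B) \<le> \<delta> / 2" using heta unfolding \<eta>_def .
    ultimately show ?thesis using rr by linarith
  qed
  have Dne: "D \<noteq> {}"
  proof
    assume De: "D = {}"
    have "{..<N} \<subseteq> {n. n < N \<and> friendly (v n)} \<union> {n. n < N \<and> unfriendly (v n)}"
      using htyp De D_def by auto
    then have "card {..<N} \<le> card ({n. n < N \<and> friendly (v n)} \<union> {n. n < N \<and> unfriendly (v n)})"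
      by (intro card_mono) auto
    also have "\<dots> \<le> card {n. n < N \<and> friendly (v n)} + card {n. n < N \<and> unfriendly (v n)}"
      by (rule card_Un_le)
    finally have "real N \<le> nF + nU" unfolding nF_def nU_def by simp
    moreover have "nF + nU \<le> (\<alpha>F + \<alpha>U) * real N" using nF nU by (simp add: algebra_simps)
    moreover have "(\<alpha>F + \<alpha>U) * real N < 1 * real N" using fr Npos by (intro mult_strict_right_mono) auto
    ultimately show False by simp
  qed
  then obtain n1 where n1: "n1 \<in> D" by blast
  show ?thesis
    unfolding strong_BNE_def not_not
  proof (intro exI conjI)
    show "D \<subseteq> {..<N}" unfolding D_def by auto
    show "valid_profile N \<sigma>'" by (rule vl')
    show "\<forall>n<N. n \<notin> D \<longrightarrow> \<sigma>' n = \<sigma> n" unfolding D_def \<sigma>'_def by auto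
    show "\<forall>n\<in>D. exp_util N \<mu> pr P (v n) \<sigma> \<le> exp_util N \<mu> pr P (v n) \<sigma>'"
    proof
      fix n assume "n \<in> D"
      from gainD[OF this] dpos show "exp_util N \<mu> pr P (v n) \<sigma> \<le> exp_util N \<mu> pr P (v n) \<sigma>'" by linarith
    qed
    show "\<exists>n\<in>D. exp_util N \<mu> pr P (v n) \<sigma> + \<delta> / 4 < exp_util N \<mu> pr P (v n) \<sigma>'"
      using gainD[OF n1] dpos n1 by (intro bexI[of _ n1]) auto
  qed
qed



theorem theorem2:
  fixes \<mu> \<alpha>F \<alpha>U :: real and B :: nat
    and pr :: "state \<Rightarrow> real" and P :: "signal \<Rightarrow> state \<Rightarrow> real"
    and v :: "nat \<Rightarrow> nat \<Rightarrow> state \<Rightarrow> outcome \<Rightarrow> nat"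
    and \<Sigma> :: "nat \<Rightarrow> nat \<Rightarrow> signal \<Rightarrow> real"
  assumes B_pos: "B > 0"
    and prior: "pr L > 0" "pr H > 0" "pr L + pr H = 1"
    and signal: "\<And>s w. P s w \<ge> 0" "\<And>w. P Sh w + P Sl w = 1" "P Sh H > P Sh L"
    and fractions: "\<alpha>F \<ge> 0" "\<alpha>U \<ge> 0"
    and not_decisive: "\<alpha>F < \<mu>" "\<alpha>U < 1 - \<mu>"
    and inst: "\<And>N. is_instance N B \<alpha>F \<alpha>U (v N)"
    and reg: "\<And>N. regular N (v N) (\<Sigma> N)"
  shows "((\<lambda>N. fidelity N \<mu> pr P (\<Sigma> N)) \<longlonglongrightarrow> 1 \<longrightarrow>
            (\<exists>\<epsilon>::nat \<Rightarrow> real. \<epsilon> \<longlonglongrightarrow> 0 \<and>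
               (\<forall>N. strong_BNE N \<mu> pr P (v N) (\<Sigma> N) (\<epsilon> N))))
       \<and> (\<not> (\<lambda>N. fidelity N \<mu> pr P (\<Sigma> N)) \<longlonglongrightarrow> 1 \<longrightarrow>
            (\<exists>\<epsilon>>0. \<exists>\<^sub>\<infinity>N. \<not> strong_BNE N \<mu> pr P (v N) (\<Sigma> N) \<epsilon>))"
proof (intro conjI impI)
  have sig: "\<And>s x. P s x \<ge> 0" "\<And>x. P Sh x + P Sl x = 1" using signal by auto
  let ?f = "\<lambda>N. fidelity N \<mu> pr P (\<Sigma> N)"
  {
    assume lim: "?f \<longlonglongrightarrow> 1"
    define \<epsilon> where "\<epsilon> N = (real B + real B * real B) * (1 - ?f N)" for N
    have "(\<lambda>N. 1 - ?f N) \<longlonglongrightarrow> 1 - 1" by (intro tendsto_diff tendsto_const lim)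
    then have "(\<lambda>N. (real B + real B * real B) * (1 - ?f N)) \<longlonglongrightarrow> (real B + real B * real B) * (1 - 1)"
      by (intro tendsto_mult tendsto_const)
    then have "\<epsilon> \<longlonglongrightarrow> 0" unfolding \<epsilon>_def by simp
    moreover have "\<forall>N. strong_BNE N \<mu> pr P (v N) (\<Sigma> N) (\<epsilon> N)"
      unfolding \<epsilon>_def using part1_N[where P=P and \<mu>=\<mu>, OF prior sig B_pos inst reg] by blast
    ultimately show "\<exists>\<epsilon>::nat \<Rightarrow> real. \<epsilon> \<longlonglongrightarrow> 0 \<and> (\<forall>N. strong_BNE N \<mu> pr P (v N) (\<Sigma> N) (\<epsilon> N))"
      by blast
  }
  {
    assume nlim: "\<not> ?f \<longlonglongrightarrow> 1"
    have fle: "?f N \<le> 1" for N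
    proof -
      have vl: "valid_profile N (\<Sigma> N)" using reg[of N] unfolding regular_def by auto
      have "0 \<le> lamA N \<mu> P (\<Sigma> N) L" "lamA N \<mu> P (\<Sigma> N) H \<le> 1"
        using lamA_01[where P=P and \<mu>=\<mu> and w=L, OF sig vl] lamA_01[where P=P and \<mu>=\<mu> and w=H, OF sig vl] by auto
      then have "0 \<le> pr L * lamA N \<mu> P (\<Sigma> N) L" "0 \<le> pr H * (1 - lamA N \<mu> P (\<Sigma> N) H)"
        using prior by auto
      then show ?thesis unfolding fidelity_eq using prior(3) by (simp add: algebra_simps)
    qed
    obtain \<delta> where dpos: "\<delta> > 0" and fr: "\<exists>\<^sub>F N in sequentially. \<not> dist (?f N) 1 < \<delta>"
      using nlim unfolding tendsto_iff not_all not_imp not_eventually by blast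
    have fr2: "\<exists>\<^sub>F N in sequentially. ?f N \<le> 1 - \<delta>"
      using fr by (rule frequently_elim1) (use fle in \<open>auto simp: dist_real_def\<close>)
    define aC where "aC = 1 - \<alpha>F - \<alpha>U"
    have aC: "aC > 0" using not_decisive aC_def by simp
    define t where "t = (\<mu> - \<alpha>F) / aC"
    have t: "0 < t" "t < 1" unfolding t_def using aC not_decisive aC_def by (auto simp: field_simps)
    have pl: "0 \<le> P Sh L" using signal by simp
    have ph: "P Sh H \<le> 1" using P_le1[of P, OF sig] by simp
    obtain x0 y0 d1 where xy: "0 \<le> x0" "x0 \<le> 1" "0 \<le> y0" "y0 \<le> 1" and d1: "d1 > 0"
      and qH: "t + d1 \<le> P Sh H * x0 + (1 - P Sh H) * y0" and qL: "P Sh L * x0 + (1 - P Sh L) * y0 \<le> t - d1"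
      using exists_xy[OF pl signal(3) ph t] by blast
    define \<delta>0 where "\<delta>0 = aC * d1"
    have d0: "\<delta>0 > 0" unfolding \<delta>0_def using aC d1 by simp
    have at: "aC * t = \<mu> - \<alpha>F" unfolding t_def using aC by simp
    have PSl: "P Sl w = 1 - P Sh w" for w using signal(2)[of w] by simp
    have hH: "\<mu> + \<delta>0 \<le> \<alpha>F + (1 - \<alpha>F - \<alpha>U) * (P Sh H * x0 + P Sl H * y0)"
    proof -
      have "aC * (t + d1) \<le> aC * (P Sh H * x0 + (1 - P Sh H) * y0)" using qH aC by (intro mult_left_mono) auto
      then show ?thesis using at unfolding \<delta>0_def aC_def PSl by (simp add: algebra_simps)
    qed
    have hL: "\<alpha>F + (1 - \<alpha>F - \<alpha>U) * (P Sh L * x0 + P Sl L * y0) \<le> \<mu> - \<delta>0"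
    proof -
      have "aC * (P Sh L * x0 + (1 - P Sh L) * y0) \<le> aC * (t - d1)" using qL aC by (intro mult_left_mono) auto
      then show ?thesis using at unfolding \<delta>0_def aC_def PSl by (simp add: algebra_simps)
    qed
    define K where "K = max 1 (max (2 / \<delta>0) (8 * (1 + real B) / (\<delta>0^2 * \<delta>)))"
    have ev: "\<forall>\<^sub>F N in sequentially. K \<le> real N"
      using filterlim_real_sequentially unfolding filterlim_at_top by blast
    have fr3: "\<exists>\<^sub>F N in sequentially. ?f N \<le> 1 - \<delta> \<and> K \<le> real N"
      by (rule frequently_eventually_frequently[OF fr2 ev])
    have "\<exists>\<^sub>F N in sequentially. \<not> strong_BNE N \<mu> pr P (v N) (\<Sigma> N) (\<delta> / 4)"
    proof (rule frequently_elim1[OF fr3])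
      fix N assume a: "?f N \<le> 1 - \<delta> \<and> K \<le> real N"
      have N1: "1 \<le> real N" "2 / \<delta>0 \<le> real N" "8 * (1 + real B) / (\<delta>0^2 * \<delta>) \<le> real N"
        using a unfolding K_def by auto
      have Npos: "N > 0" using N1 by simp
      have hN: "2 \<le> real N * \<delta>0" using N1(2) d0 by (simp add: field_simps)
      have heta: "4 / (\<delta>0^2 * real N) * (1 + real B) \<le> \<delta> / 2"
        using N1(3) d0 dpos Npos by (simp add: field_simps)
      show "\<not> strong_BNE N \<mu> pr P (v N) (\<Sigma> N) (\<delta> / 4)"
        by (rule part2_N[where P=P and \<mu>=\<mu>, OF prior sig B_pos fractions _ inst reg xy d0 hH hL Npos dpos _ hN heta])
           (use not_decisive a in auto)
    qed
    then show "\<exists>\<epsilon>>0. \<exists>\<^sub>\<infinity>N. \<not> strong_BNE N \<mu> pr P (v N) (\<Sigma> N) \<epsilon>"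
      unfolding cofinite_eq_sequentially using dpos by (intro exI[of _ "\<delta> / 4"]) auto
  }
qed

end
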